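(* Let $n\ge2$ and consider admissible 4-tuples $(\sigma_0,\sigma_\infty,\sigma_1,\tau)\in S_{2n}^4$. If such a tuple is special and $\sigma_1$ and $\tau$ have disjoint supports, then $\sigma_0=\prod_{i=1}^{n}(i,\,2n+1-i)$, $\sigma_1\tau=\prod_{i=1}^{n-1}(i,\,2n-i)$, and $\tau$ is one of the $n-1$ transpositions $(i,2n-i)$, $1\le i\le n-1$ (each choice giving a special tuple). Two distinct such special tuples are conjugate if and only if they are exchanged by conjugation by $\sigma_\infty^n$; such a conjugation fixes the tuple only when $n$ is even and $\tau=(n/2,\,3n/2)$. Consequently the number of conjugacy classes of admissible 4-tuples with $\sigma_1$ and $\tau$ disjoint is $\lfloor n/2\rfloor$.
   Context: Permutation products are read left to right ($\sigma\sigma'$: first $\sigma$, then $\sigma'$). An admissible 4-tuple (the case $\deg D=4$ with maximal branching, i.e. $A^2$ branched over $0,1,\infty$ and exactly one further point, $\deg A=n$) is $(\sigma_0,\sigma_\infty,\sigma_1,\tau)\in S_{2n}^4$ with $\sigma_0$ a product of $n$ disjoint transpositions, $\sigma_\infty$ a $2n$-cycle, $\sigma_1$ a product of $n-2$ disjoint transpositions, $\tau$ a transposition, and $\sigma_0\sigma_\infty\sigma_1\tau=\mathrm{id}$. Tuples $\Sigma,\Sigma'$ are conjugate if $\Sigma'=\gamma^{-1}\Sigma\gamma$ componentwise for some $\gamma\in S_{2n}$. A tuple is special if $\sigma_\infty=(2n,2n-1,\dots,1)$ (the cycle $2n\mapsto2n-1\mapsto\dots\mapsto1\mapsto2n$)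 and $\sigma_1(2n)=\tau(2n)=2n$; every conjugacy class contains special tuples. *)

theory Defs
  imports "HOL-Combinatorics.Combinatorics"
begin

(* Permutations of {1..2n} are functions nat => nat that permute {1..2n}
   (and fix every other natural number). *)

(* Product read left to right: pmul s s' = "first s, then s'". *)
definition pmul :: "(nat \<Rightarrow> nat) \<Rightarrow> (nat \<Rightarrow> nat) \<Rightarrow> (nat \<Rightarrow> nat)" where
  "pmul s s' = s' \<circ> s"

definition prod_transp :: "(nat \<times> nat) list \<Rightarrow> (nat \<Rightarrow> nat)" where
  "prod_transp ps = foldr (\<lambda>(a,b) f. transpose a b \<circ> f) ps id"

definition prod_disj_transp :: "nat \<Rightarrow> (nat \<Rightarrow> nat) \<Rightarrow> bool" where
  "prod_disj_transp k p \<longleftrightarrow>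
     (\<exists>ps. length ps = k \<and> distinct (concat (map (\<lambda>(a,b). [a,b]) ps)) \<and> p = prod_transp ps)"

definition is_transposition :: "(nat \<Rightarrow> nat) \<Rightarrow> bool" where
  "is_transposition p \<longleftrightarrow> (\<exists>a b. a \<noteq> b \<and> p = transpose a b)"

definition is_full_cycle :: "nat \<Rightarrow> (nat \<Rightarrow> nat) \<Rightarrow> bool" where
  "is_full_cycle n p \<longleftrightarrow>
     (\<exists>xs. length xs = 2*n \<and> distinct xs \<and> set xs = {1..2*n} \<and> p = cycle_of_list xs)"

type_synonym tuple4 = "(nat \<Rightarrow> nat) \<times> (nat \<Rightarrow> nat) \<times> (nat \<Rightarrow> nat) \<times> (nat \<Rightarrow> nat)"

definition admissible :: "nat \<Rightarrow> tuple4 \<Rightarrow> bool" where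
  "admissible n T \<longleftrightarrow> (case T of (s0, si, s1, t) \<Rightarrow>
     s0 permutes {1..2*n} \<and> si permutes {1..2*n} \<and> s1 permutes {1..2*n} \<and> t permutes {1..2*n} \<and>
     prod_disj_transp n s0 \<and> is_full_cycle n si \<and> prod_disj_transp (n-2) s1 \<and>
     is_transposition t \<and> pmul (pmul (pmul s0 si) s1) t = id)"

definition pconj :: "(nat \<Rightarrow> nat) \<Rightarrow> (nat \<Rightarrow> nat) \<Rightarrow> (nat \<Rightarrow> nat)" where
  "pconj g s = pmul (pmul (inv g) s) g"

definition tconj :: "(nat \<Rightarrow> nat) \<Rightarrow> tuple4 \<Rightarrow> tuple4" where
  "tconj g T = (case T of (s0, si, s1, t) \<Rightarrow> (pconj g s0, pconj g si, pconj g s1, pconj g t))"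

definition conjugate :: "nat \<Rightarrow> tuple4 \<Rightarrow> tuple4 \<Rightarrow> bool" where
  "conjugate n T T' \<longleftrightarrow> (\<exists>g. g permutes {1..2*n} \<and> T' = tconj g T)"

definition sigma_std :: "nat \<Rightarrow> (nat \<Rightarrow> nat)" where
  "sigma_std n = cycle_of_list (rev [1..<2*n+1])"

definition special :: "nat \<Rightarrow> tuple4 \<Rightarrow> bool" where
  "special n T \<longleftrightarrow> (case T of (s0, si, s1, t) \<Rightarrow>
     si = sigma_std n \<and> s1 (2*n) = 2*n \<and> t (2*n) = 2*n)"

definition supp :: "(nat \<Rightarrow> nat) \<Rightarrow> nat set" where
  "supp p = {x. p x \<noteq> x}"

definition disj_st :: "tuple4 \<Rightarrow> bool" where
  "disj_st T \<longleftrightarrow> (case T of (s0, si, s1, t) \<Rightarrow> supp s1 \<inter> supp t = {})"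

definition adm_disj :: "nat \<Rightarrow> tuple4 set" where
  "adm_disj n = {T. admissible n T \<and> disj_st T}"

definition conj_rel :: "nat \<Rightarrow> (tuple4 \<times> tuple4) set" where
  "conj_rel n = {(T, T'). T \<in> adm_disj n \<and> T' \<in> adm_disj n \<and> conjugate n T T'}"

end

theory Submission
  imports Defs
begin


lemma prod_transp_Nil[simp]: "prod_transp [] = id"
  by (simp add: prod_transp_def)
lemma prod_transp_Cons[simp]: "prod_transp ((a,b)#ps) = transpose a b \<circ> prod_transp ps"
  by (simp add: prod_transp_def)

definition ents :: "(nat \<times> nat) list \<Rightarrow> nat list" where
  "ents ps = concat (map (\<lambda>(a,b). [a,b]) ps)"

lemma ents_Cons[simp]: "ents ((a,b)#ps) = a # b # ents ps" "ents [] = []"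
  by (simp_all add: ents_def)

lemma pt_fix: "x \<notin> set (ents ps) \<Longrightarrow> prod_transp ps x = x"
  by (induction ps) (auto simp: ents_def)

lemma pt_invol: "distinct (ents ps) \<Longrightarrow> prod_transp ps (prod_transp ps x) = x"
proof (induction ps arbitrary: x)
  case Nil then show ?case by simp
next
  case (Cons p ps)
  obtain a b where p: "p = (a,b)" by force
  let ?Q = "prod_transp ps"
  have d: "distinct (ents ps)" "a \<notin> set (ents ps)" "b \<notin> set (ents ps)" "a \<noteq> b"
    using Cons.prems p by auto
  have Qa: "?Q a = a" "?Q b = b" using pt_fix d by auto
  have QQ: "?Q (?Q y) = y" for y using Cons.IH d by auto
  show ?case
  proof (cases "?Q x = a \<or> ?Q x = b")
    case True
    then show ?thesis using Qa QQ p d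
      by (metis comp_apply prod_transp_Cons transpose_apply_first transpose_apply_second)
  next
    case False
    then have "x \<noteq> a" "x \<noteq> b" using Qa by auto
    then show ?thesis using False p QQ by (simp add: transpose_def)
  qed
qed

lemma pt_permutes: "set (ents ps) \<subseteq> S \<Longrightarrow> prod_transp ps permutes S"
proof (induction ps)
  case Nil then show ?case using permutes_id by (simp add: id_def)
next
  case (Cons p ps)
  obtain a b where p: "p = (a,b)" by force
  have 1: "prod_transp ps permutes S" using Cons p by auto
  have 2: "transpose a b permutes S" using Cons p by (auto intro: permutes_swap_id)
  show ?case unfolding p prod_transp_Cons by (rule permutes_compose[OF 1 2])
qed

lemma pt_eval:
  assumes "distinct xs" "\<forall>j\<in>set xs. 2*j < m"
  shows "prod_transp (map (\<lambda>j. (j, m-j)) xs) x =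
         (if x \<in> set xs \<or> (x \<le> m \<and> m - x \<in> set xs) then m - x else x)"
  using assms
proof (induction xs arbitrary: x)
  case Nil then show ?case by simp
next
  case (Cons a xs)
  show ?case using Cons by (auto simp: transpose_def)
qed

lemma pt_distinct:
  assumes "distinct xs" "\<forall>j\<in>set xs. 2*j < m"
  shows "distinct (ents (map (\<lambda>j. (j, m-j)) xs))"
  using assms
proof (induction xs)
  case Nil then show ?case by simp
next
  case (Cons a xs)
  have "set (ents (map (\<lambda>j. (j, m-j)) xs)) = set xs \<union> (\<lambda>j. m-j) ` set xs"
    by (induction xs) auto
  moreover have "m - a \<noteq> m - x \<and> a \<noteq> m - x \<and> m - a \<noteq> x" if "x \<in> set xs" for x
  proof -
    have "2*x < m" "x \<noteq> a" using Cons.prems that by auto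
    then show ?thesis using Cons.prems by auto
  qed
  ultimately show ?case using Cons by auto
qed



lemma rev_upt_step: "rev [1..<Suc (Suc j)] = Suc j # rev [1..<Suc j]"
  by simp

lemma cyc_rev_eval:
  "cycle_of_list (rev [1..<Suc m + 1]) x = (if 2 \<le> x \<and> x \<le> Suc m then x - 1 else if x = 1 then Suc m else x)"
proof (induction m arbitrary: x)
  case 0 then show ?case by simp
next
  case (Suc m)
  have e: "rev [1..<Suc (Suc m) + 1] = Suc (Suc m) # Suc m # rev [1..<Suc m]"
    by simp
  have e2: "rev [1..<Suc m + 1] = Suc m # rev [1..<Suc m]" by simp
  have "cycle_of_list (rev [1..<Suc (Suc m) + 1]) x
      = transpose (Suc (Suc m)) (Suc m) (cycle_of_list (rev [1..<Suc m + 1]) x)"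
    unfolding e e2 by simp
  then show ?case using Suc.IH[of x] by (auto simp: transpose_def)
qed

lemma sigma_eval:
  assumes "n \<ge> 1"
  shows "sigma_std n x = (if 2 \<le> x \<and> x \<le> 2*n then x - 1 else if x = 1 then 2*n else x)"
proof -
  obtain m where m: "2*n = Suc m" using assms by (cases "2*n") auto
  show ?thesis unfolding sigma_std_def m using cyc_rev_eval[of m x] by simp
qed

definition S0 :: "nat \<Rightarrow> nat \<Rightarrow> nat" where
  "S0 n = prod_transp (map (\<lambda>i. (i, 2*n+1-i)) [1..<n+1])"
definition CC :: "nat \<Rightarrow> nat \<Rightarrow> nat" where
  "CC n = prod_transp (map (\<lambda>i. (i, 2*n-i)) [1..<n])"
definition s1i :: "nat \<Rightarrow> nat \<Rightarrow> nat \<Rightarrow> nat" where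
  "s1i n i = prod_transp (map (\<lambda>j. (j, 2*n-j)) (removeAll i [1..<n]))"
definition RR :: "nat \<Rightarrow> nat \<Rightarrow> nat" where
  "RR n x = (if 1 \<le> x \<and> x \<le> n then x + n else if n < x \<and> x \<le> 2*n then x - n else x)"

lemma S0_eval: "S0 n x = (if 1 \<le> x \<and> x \<le> 2*n then 2*n+1-x else x)"
proof -
  have "S0 n x = (if x \<in> set [1..<n+1] \<or> (x \<le> 2*n+1 \<and> 2*n+1 - x \<in> set [1..<n+1]) then 2*n+1 - x else x)"
    unfolding S0_def by (rule pt_eval) auto
  moreover have "(x \<in> set [1..<n+1] \<or> (x \<le> 2*n+1 \<and> 2*n+1 - x \<in> set [1..<n+1])) \<longleftrightarrow> (1 \<le> x \<and> x \<le> 2*n)"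
    by (simp only: set_upt atLeastLessThan_iff) linarith
  ultimately show ?thesis by simp
qed

lemma CC_eval: "CC n x = (if 1 \<le> x \<and> x < 2*n \<and> x \<noteq> n then 2*n-x else x)"
proof -
  have "CC n x = (if x \<in> set [1..<n] \<or> (x \<le> 2*n \<and> 2*n - x \<in> set [1..<n]) then 2*n - x else x)"
    unfolding CC_def by (rule pt_eval) auto
  moreover have "(x \<in> set [1..<n] \<or> (x \<le> 2*n \<and> 2*n - x \<in> set [1..<n])) \<longleftrightarrow> (1 \<le> x \<and> x < 2*n \<and> x \<noteq> n)"
    by (simp only: set_upt atLeastLessThan_iff) linarith
  ultimately show ?thesis by simp
qed

lemma s1i_eval: assumes "1 \<le> i" "i < n" shows "s1i n i x = (if 1 \<le> x \<and> x < 2*n \<and> x \<noteq> n \<and> x \<noteq> i \<and> x \<noteq> 2*n-i then 2*n-x else x)"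
proof -
  have "s1i n i x = (if x \<in> set (removeAll i [1..<n]) \<or> (x \<le> 2*n \<and> 2*n - x \<in> set (removeAll i [1..<n])) then 2*n - x else x)"
    unfolding s1i_def by (rule pt_eval) (auto simp: distinct_removeAll)
  moreover have "(x \<in> set (removeAll i [1..<n]) \<or> (x \<le> 2*n \<and> 2*n - x \<in> set (removeAll i [1..<n]))) \<longleftrightarrow> (1 \<le> x \<and> x < 2*n \<and> x \<noteq> n \<and> x \<noteq> i \<and> x \<noteq> 2*n-i)"
    using assms by (simp only: set_removeAll set_upt atLeastLessThan_iff Diff_iff singleton_iff) linarith
  ultimately show ?thesis by simp
qed

lemma sigma_pow_in:
  assumes "n \<ge> 1" "k < 2*n" "1 \<le> x" "x \<le> 2*n"
  shows "(sigma_std n ^^ k) x = (if k < x then x - k else x + 2*n - k)"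
  using assms(2)
proof (induction k)
  case 0 then show ?case using assms by simp
next
  case (Suc k)
  then have IH: "(sigma_std n ^^ k) x = (if k < x then x - k else x + 2*n - k)" by simp
  have n1: "n \<ge> 1" using assms by simp
  show ?case
  proof (cases "k < x")
    case True
    then have "(sigma_std n ^^ Suc k) x = sigma_std n (x - k)" using IH by simp
    also have "\<dots> = (if Suc k < x then x - Suc k else x + 2*n - Suc k)"
      unfolding sigma_eval[OF n1] using True Suc.prems assms by auto
    finally show ?thesis .
  next
    case False
    then have "(sigma_std n ^^ Suc k) x = sigma_std n (x + 2*n - k)" using IH by simp
    also have "\<dots> = (if Suc k < x then x - Suc k else x + 2*n - Suc k)"
      unfolding sigma_eval[OF n1] using False Suc.prems assms by auto
    finally show ?thesis .
  qed
qed

lemma sigma_pow_out: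
  assumes "n \<ge> 1" "\<not> (1 \<le> x \<and> x \<le> 2*n)"
  shows "(sigma_std n ^^ k) x = x"
proof (induction k)
  case 0 then show ?case by simp
next
  case (Suc k)
  have "(sigma_std n ^^ Suc k) x = sigma_std n x" using Suc by simp
  also have "\<dots> = x" unfolding sigma_eval[OF assms(1)] using assms by auto
  finally show ?case .
qed

lemma sigma_pow_n: "n \<ge> 1 \<Longrightarrow> sigma_std n ^^ n = RR n"
proof
  fix x assume n: "n \<ge> 1"
  show "(sigma_std n ^^ n) x = RR n x"
  proof (cases "1 \<le> x \<and> x \<le> 2*n")
    case True then show ?thesis using sigma_pow_in[OF n, of n x] n by (auto simp: RR_def)
  next
    case False then show ?thesis using sigma_pow_out[OF n False] by (auto simp: RR_def)
  qed
qed



lemma pconj_eq: "pconj g s = g \<circ> s \<circ> inv g"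
  by (simp add: pconj_def pmul_def comp_assoc)

lemma core:
  assumes n: "n \<ge> 2"
  and p0: "s0 permutes {1..2*n}" and p1: "s1 permutes {1..2*n}" and pt: "t permutes {1..2*n}"
  and i0: "\<And>x. s0 (s0 x) = x" and i1: "\<And>x. s1 (s1 x) = x"
  and ta: "t = transpose a b" "a \<noteq> b"
  and dj: "supp s1 \<inter> supp t = {}"
  and eq: "\<And>x. t (s1 (sigma_std n (s0 x))) = x"
  and f1: "s1 (2*n) = 2*n" and ft: "t (2*n) = 2*n"
  shows "s0 = S0 n \<and> (\<forall>x. t (s1 x) = CC n x) \<and> (\<exists>i\<in>{1..n-1}. t = transpose i (2*n-i))"
proof -
  have n1: "n \<ge> 1" using n by simp
  have tt: "t (t x) = x" for x using ta by simp
  have comm: "t (s1 x) = s1 (t x)" for x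
  proof (cases "t x \<noteq> x")
    case True
    then have "s1 x = x" using dj by (auto simp: supp_def)
    moreover have "t (t x) \<noteq> t x" using True tt by metis
    then have "s1 (t x) = t x" using dj by (auto simp: supp_def)
    ultimately show ?thesis by simp
  next
    case False
    show ?thesis
    proof (cases "s1 x = x")
      case True then show ?thesis using False by simp
    next
      case F2: False
      have "s1 (s1 x) \<noteq> s1 x" using F2 i1 by metis
      then have "t (s1 x) = s1 x" using dj by (auto simp: supp_def)
      then show ?thesis using False by simp
    qed
  qed
  define c where "c x = sigma_std n (s0 x)" for x
  have cts: "c x = t (s1 x)" for x
  proof -
    let ?y = "c x"
    have "t (s1 ?y) = x" using eq c_def by simp
    then have "t (s1 x) = t (s1 (t (s1 ?y)))" by simp
    also have "\<dots> = ?y" using comm i1 tt by metis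
    finally show ?thesis by simp
  qed
  have cc: "c (c x) = x" for x
    using cts comm i1 tt by metis
  have s0r: "s0 y \<in> {1..2*n}" if "y \<in> {1..2*n}" for y
    using permutes_in_image[OF p0, of y] that by blast
  have "c (2*n) = 2*n" using cts f1 ft by simp
  then have "sigma_std n (s0 (2*n)) = 2*n" by (simp add: c_def)
  moreover have "s0 (2*n) \<in> {1..2*n}" using s0r n by simp
  ultimately have s02: "s0 (2*n) = 1" unfolding sigma_eval[OF n1] by (auto split: if_splits)
  have key: "j < 2*n \<Longrightarrow> s0 (2*n - j) = j + 1" for j
  proof (induction j)
    case 0 then show ?case using s02 by simp
  next
    case (Suc j)
    let ?y = "2*n - j"
    have sy: "s0 ?y = j + 1" using Suc by simp
    have "c (s0 ?y) = sigma_std n ?y" using i0 by (simp add: c_def)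
    also have "\<dots> = ?y - 1" unfolding sigma_eval[OF n1] using Suc.prems by auto
    finally have "c (?y - 1) = s0 ?y" using cc by metis
    then have w: "sigma_std n (s0 (?y - 1)) = j + 1" using sy by (simp add: c_def)
    have wr: "s0 (?y - 1) \<in> {1..2*n}" using s0r Suc.prems by auto
    have "s0 (?y - 1) = j + 2"
      using w wr Suc.prems unfolding sigma_eval[OF n1] by (auto split: if_splits)
    moreover have "?y - 1 = 2*n - Suc j" by simp
    ultimately show ?case by simp
  qed
  have s0eq: "s0 = S0 n"
  proof
    fix x
    show "s0 x = S0 n x"
    proof (cases "1 \<le> x \<and> x \<le> 2*n")
      case True
      then have "s0 (2*n - (2*n - x)) = 2*n - x + 1" using key[of "2*n - x"] by simp
      then show ?thesis using True by (simp add: S0_eval Suc_diff_le)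
    next
      case False
      then have "x \<notin> {1..2*n}" by simp
      then have "s0 x = x" using p0 by (simp add: permutes_not_in)
      then show ?thesis using False by (auto simp: S0_eval)
    qed
  qed
  have ctC: "t (s1 x) = CC n x" for x
  proof -
    have "t (s1 x) = sigma_std n (S0 n x)" using cts s0eq by (simp add: c_def)
    also have "\<dots> = CC n x"
      unfolding sigma_eval[OF n1] S0_eval CC_eval using n1 by auto
    finally show ?thesis .
  qed
  have ar: "a \<in> {1..2*n}"
  proof (rule ccontr)
    assume "a \<notin> {1..2*n}"
    then have "t a = a" using pt by (simp add: permutes_not_in)
    then show False using ta by simp
  qed
  have "t a \<noteq> a" using ta by simp
  then have "s1 a = a" using dj by (auto simp: supp_def)
  then have "CC n a = b" using ctC[of a] ta by simp
  then have ab: "1 \<le> a \<and> a < 2*n \<and> a \<noteq> n \<and> b = 2*n - a" using ta(2)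
    unfolding CC_eval by (auto split: if_splits)
  have "\<exists>i\<in>{1..n-1}. t = transpose i (2*n-i)"
  proof (cases "a < n")
    case True then show ?thesis using ab ta by (intro bexI[of _ a]) auto
  next
    case False
    then have "t = transpose (2*n-a) (2*n - (2*n-a))" using ab ta by (simp add: transpose_commute)
    then show ?thesis using ab False by (intro bexI[of _ "2*n-a"]) auto
  qed
  then show ?thesis using s0eq ctC by blast
qed



lemma CC_sigma: "n \<ge> 1 \<Longrightarrow> sigma_std n (S0 n x) = CC n x"
  by (cases "x = 0"; cases "x \<le> 2*n"; cases "x = 2*n"; simp add: sigma_eval S0_eval CC_eval; arith)

lemma RR_invol: "RR n (RR n x) = x"
  by (cases "x = 0"; cases "x \<le> n"; cases "x \<le> 2*n"; simp add: RR_def; arith)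

lemma RR_sigma: "n \<ge> 1 \<Longrightarrow> RR n (sigma_std n x) = sigma_std n (RR n x)"
  by (cases "x = 0"; cases "x = 1"; cases "x \<le> n"; cases "x = n + 1"; cases "x \<le> 2*n"; simp add: sigma_eval RR_def; arith)

lemma RR_S0: "RR n (S0 n (RR n x)) = S0 n x"
  by (cases "x = 0"; cases "x \<le> n"; cases "x \<le> 2*n"; simp add: S0_eval RR_def; arith)

lemma CC_invol: "CC n (CC n x) = x"
  by (cases "x = 0"; cases "x = n"; cases "x < 2*n"; simp add: CC_eval; arith)

lemma RR_CC: "RR n (CC n (RR n x)) = CC n x"
  by (cases "x = 0"; cases "x = n"; cases "x = 2*n"; cases "x \<le> n"; cases "x \<le> 2*n"; simp add: CC_eval RR_def; arith)

lemma RR_t: "1 \<le> i \<Longrightarrow> i < n \<Longrightarrow> RR n (transpose i (2*n-i) (RR n x)) = transpose (n-i) (2*n-(n-i)) x"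
  by (cases "x = 0"; cases "x \<le> n"; cases "x \<le> 2*n"; cases "x = i"; cases "x = n - i"; cases "x = n + i"; cases "x = 2*n - i"; simp add: RR_def transpose_def; arith)

lemma s1i_alt:
  assumes "1 \<le> i" "i < n" shows "s1i n i x = transpose i (2*n-i) (CC n x)"
proof -
  consider "x = i" | "x = 2*n-i" | "x \<noteq> i" "x \<noteq> 2*n-i" by blast
  then show ?thesis
  proof cases
    case 1 then show ?thesis using assms by (simp add: s1i_eval CC_eval)
  next
    case 2
    have "CC n x = i" using 2 assms unfolding CC_eval by auto
    then show ?thesis using 2 assms by (simp add: s1i_eval)
  next
    case 3
    have "CC n x \<noteq> i" "CC n x \<noteq> 2*n-i"
      using 3 assms unfolding CC_eval by auto
    then have "transpose i (2*n-i) (CC n x) = CC n x" by (simp add: transpose_def)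
    then show ?thesis using 3 assms by (simp add: s1i_eval CC_eval)
  qed
qed

lemma RR_s1i: "1 \<le> i \<Longrightarrow> i < n \<Longrightarrow> RR n (s1i n i (RR n x)) = s1i n (n-i) x"
proof -
  assume a: "1 \<le> i" "i < n"
  have "RR n (s1i n i (RR n x)) = RR n (transpose i (2*n-i) (RR n (RR n (CC n (RR n x)))))"
    using a by (simp add: s1i_alt RR_invol)
  also have "\<dots> = transpose (n-i) (2*n-(n-i)) (RR n (CC n (RR n x)))" using RR_t a by simp
  also have "\<dots> = s1i n (n-i) x" using a by (simp add: RR_CC s1i_alt)
  finally show ?thesis .
qed

lemma Ti_prod: "n \<ge> 1 \<Longrightarrow> 1 \<le> i \<Longrightarrow> i < n \<Longrightarrow> transpose i (2*n-i) (s1i n i (sigma_std n (S0 n x))) = x"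
  by (simp add: CC_sigma s1i_alt CC_invol)



definition Ti :: "nat \<Rightarrow> nat \<Rightarrow> tuple4" where
  "Ti n i = (S0 n, sigma_std n, s1i n i, transpose i (2*n-i))"

lemma part1:
  assumes n: "n \<ge> 2" and adm: "admissible n (s0, si, s1, t)" and sp: "special n (s0, si, s1, t)"
    and dj: "disj_st (s0, si, s1, t)"
  shows "si = sigma_std n \<and> s0 = S0 n \<and> (\<forall>x. t (s1 x) = CC n x) \<and> (\<exists>i\<in>{1..n-1}. t = transpose i (2*n-i))"
proof -
  from adm have p0: "s0 permutes {1..2*n}" and p1: "s1 permutes {1..2*n}" and pt: "t permutes {1..2*n}"
    and d0: "prod_disj_transp n s0" and d1: "prod_disj_transp (n-2) s1" and tr: "is_transposition t"
    and pr: "pmul (pmul (pmul s0 si) s1) t = id"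
    unfolding admissible_def by auto
  from sp have si: "si = sigma_std n" and f1: "s1 (2*n) = 2*n" and ft: "t (2*n) = 2*n"
    unfolding special_def by auto
  from d0 obtain ps0 where "distinct (ents ps0)" "s0 = prod_transp ps0"
    unfolding prod_disj_transp_def ents_def by auto
  then have i0: "s0 (s0 x) = x" for x using pt_invol by simp
  from d1 obtain ps1 where "distinct (ents ps1)" "s1 = prod_transp ps1"
    unfolding prod_disj_transp_def ents_def by auto
  then have i1: "s1 (s1 x) = x" for x using pt_invol by simp
  from tr obtain a b where ta: "t = transpose a b" "a \<noteq> b" unfolding is_transposition_def by auto
  have dj': "supp s1 \<inter> supp t = {}" using dj unfolding disj_st_def by simp
  have eq: "t (s1 (sigma_std n (s0 x))) = x" for x
    using fun_cong[OF pr, of x] si by (simp add: pmul_def)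
  show ?thesis using core[OF n p0 p1 pt i0 i1 ta dj' eq f1 ft] si by blast
qed

lemma ents_map_set: "set (ents (map (\<lambda>j. (j, m-j)) xs)) = set xs \<union> (\<lambda>j. m-j) ` set xs"
  by (induction xs) auto

lemma length_ents: "length (ents ps) = 2 * length ps"
  by (induction ps) (auto simp: ents_def)

lemma sigma_permutes: "sigma_std n permutes {1..2*n}"
proof -
  have "set (rev [1..<2*n+1]) = {1..2*n}" by auto
  then show ?thesis unfolding sigma_std_def using cycle_permutes by metis
qed

lemma Ti_special: "1 \<le> i \<Longrightarrow> i < n \<Longrightarrow> special n (Ti n i)"
  unfolding special_def Ti_def by (auto simp: s1i_eval)

lemma Ti_adm:
  assumes "1 \<le> i" "i < n"
  shows "Ti n i \<in> adm_disj n"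
proof -
  have n1: "n \<ge> 1" using assms by simp
  have pS0: "S0 n permutes {1..2*n}" unfolding S0_def
    by (rule pt_permutes) (auto simp: ents_map_set)
  have ps1: "s1i n i permutes {1..2*n}" unfolding s1i_def
    by (rule pt_permutes) (auto simp: ents_map_set)
  have pt: "transpose i (2*n-i) permutes {1..2*n}" using assms by (intro permutes_swap_id) auto
  have dS0: "prod_disj_transp n (S0 n)" unfolding prod_disj_transp_def S0_def
    apply (rule exI[of _ "map (\<lambda>i. (i, 2*n+1-i)) [1..<n+1]"])
    using pt_distinct[of "[1..<n+1]" "2*n+1"] by (auto simp: ents_def)
  have len: "length (removeAll i [1..<n]) = n - 2"
  proof -
    have "removeAll i [1..<n] = remove1 i [1..<n]" by (simp add: distinct_remove1_removeAll)
    then show ?thesis using assms by (simp add: length_remove1)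
  qed
  have ds1: "prod_disj_transp (n-2) (s1i n i)" unfolding prod_disj_transp_def s1i_def
    apply (rule exI[of _ "map (\<lambda>j. (j, 2*n-j)) (removeAll i [1..<n])"])
    using pt_distinct[of "removeAll i [1..<n]" "2*n"] len by (auto simp: ents_def distinct_removeAll)
  have cyc: "is_full_cycle n (sigma_std n)" unfolding is_full_cycle_def sigma_std_def
    by (rule exI[of _ "rev [1..<2*n+1]"]) auto
  have tr: "is_transposition (transpose i (2*n-i))" unfolding is_transposition_def
    using assms by (intro exI[of _ i] exI[of _ "2*n-i"]) auto
  have pr: "pmul (pmul (pmul (S0 n) (sigma_std n)) (s1i n i)) (transpose i (2*n-i)) = id"
    using Ti_prod[OF n1 assms] by (auto simp: pmul_def)
  have dj: "supp (s1i n i) \<inter> supp (transpose i (2*n-i)) = {}"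
    using assms by (auto simp: supp_def s1i_eval transpose_def)
  show ?thesis unfolding adm_disj_def admissible_def disj_st_def Ti_def
    apply (simp only: prod.case mem_Collect_eq)
    by (simp only: pS0 ps1 pt dS0 ds1 cyc tr pr dj sigma_permutes[of n] simp_thms)
qed

lemma special_form:
  assumes n: "n \<ge> 2" and T: "T \<in> adm_disj n" and sp: "special n T"
  shows "\<exists>i\<in>{1..n-1}. T = Ti n i"
proof -
  obtain s0 si s1 t where Te: "T = (s0, si, s1, t)" by (cases T) auto
  have "si = sigma_std n \<and> s0 = S0 n \<and> (\<forall>x. t (s1 x) = CC n x) \<and> (\<exists>i\<in>{1..n-1}. t = transpose i (2*n-i))"
    using part1[OF n] T sp unfolding Te adm_disj_def by auto
  then obtain i where i: "i \<in> {1..n-1}" "t = transpose i (2*n-i)" and si: "si = sigma_std n"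
    and s0: "s0 = S0 n" and ct: "\<forall>x. t (s1 x) = CC n x" by blast
  have "s1 = s1i n i"
  proof
    fix x
    have ii: "1 \<le> i" "i < n" using i n by auto
    have "s1 x = t (t (s1 x))" using i by simp
    also have "\<dots> = s1i n i x" using ct i s1i_alt[OF ii] by simp
    finally show "s1 x = s1i n i x" .
  qed
  then show ?thesis using i si s0 Te by (auto simp: Ti_def)
qed

lemma t_inj:
  fixes i j n :: nat
  assumes "1 \<le> i" "i < n" "1 \<le> j" "j < n" "transpose i (2*n-i) = transpose j (2*n-j)"
  shows "i = j"
proof (rule ccontr)
  assume "i \<noteq> j"
  have "transpose i (2*n-i) i = transpose j (2*n-j) i" using assms(5) by simp
  moreover have "transpose j (2*n-j) i = i" using assms \<open>i \<noteq> j\<close> by (intro transpose_apply_other) auto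
  moreover have "transpose i (2*n-i) i = 2*n-i" by simp
  ultimately show False using assms by simp
qed

lemma Ti_inj: fixes i j n :: nat shows "1 \<le> i \<Longrightarrow> i < n \<Longrightarrow> 1 \<le> j \<Longrightarrow> j < n \<Longrightarrow> Ti n i = Ti n j \<Longrightarrow> i = j"
  unfolding Ti_def using t_inj by auto

lemma RR_inv: "inv (RR n) = RR n"
  by (rule inv_unique_comp) (auto simp: RR_invol)

lemma RR_permutes: "RR n permutes {1..2*n}"
proof (rule bij_imp_permutes)
  show "bij_betw (RR n) {1..2*n} {1..2*n}"
    by (rule bij_betw_byWitness[of _ "RR n"]) (auto simp: RR_invol, auto simp: RR_def)
  show "\<And>x. x \<notin> {1..2 * n} \<Longrightarrow> RR n x = x" by (auto simp: RR_def)
qed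

lemma pconj_RR: "pconj (RR n) f = (\<lambda>x. RR n (f (RR n x)))"
  by (simp add: pconj_eq RR_inv comp_def)

lemma RR_sigma_conj: "n \<ge> 1 \<Longrightarrow> RR n (sigma_std n (RR n x)) = sigma_std n x"
  by (simp add: RR_sigma RR_invol)

lemma tconj_Ti:
  assumes "1 \<le> i" "i < n"
  shows "tconj (RR n) (Ti n i) = Ti n (n-i)"
proof -
  have n1: "n \<ge> 1" using assms by simp
  have "pconj (RR n) (S0 n) = S0 n" unfolding pconj_RR by (simp add: RR_S0)
  moreover have "pconj (RR n) (sigma_std n) = sigma_std n" unfolding pconj_RR by (simp add: RR_sigma_conj[OF n1])
  moreover have "pconj (RR n) (s1i n i) = s1i n (n-i)" unfolding pconj_RR by (simp add: RR_s1i[OF assms])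
  moreover have "pconj (RR n) (transpose i (2*n-i)) = transpose (n-i) (2*n-(n-i))"
    unfolding pconj_RR by (simp add: RR_t[OF assms])
  ultimately show ?thesis unfolding tconj_def Ti_def by simp
qed



lemma pconj_id: "pconj id s = s"
  by (simp add: pconj_eq)

lemma pconj_id': "pconj (\<lambda>a. a) s = s"
  using pconj_id by (simp add: id_def)

lemma tconj_id: "tconj id T = T"
  by (cases T) (simp add: tconj_def pconj_id)

lemma pconj_comp:
  assumes "g permutes S" "h permutes S"
  shows "pconj h (pconj g s) = pconj (h \<circ> g) s"
  using assms by (simp add: pconj_eq o_inv_distrib permutes_bij comp_assoc)

lemma tconj_comp:
  assumes "g permutes S" "h permutes S"
  shows "tconj h (tconj g T) = tconj (h \<circ> g) T"
  by (cases T) (simp add: tconj_def pconj_comp[OF assms])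

lemma pconj_inv:
  assumes "g permutes S"
  shows "pconj (inv g) (pconj g s) = s"
proof -
  have "pconj (inv g) (pconj g s) = pconj (inv g \<circ> g) s"
    by (rule pconj_comp[OF assms permutes_inv[OF assms]])
  also have "inv g \<circ> g = id" using permutes_inv_o[OF assms] by simp
  finally show ?thesis by (simp add: pconj_id pconj_id')
qed

lemma tconj_inv:
  assumes "g permutes S"
  shows "tconj (inv g) (tconj g T) = T"
  by (cases T) (simp add: tconj_def pconj_inv[OF assms])

lemma equiv_conj: "equiv (adm_disj n) (conj_rel n)"
proof (rule equivI)
  show "conj_rel n \<subseteq> adm_disj n \<times> adm_disj n" unfolding conj_rel_def by auto
  show "refl_on (adm_disj n) (conj_rel n)"
    unfolding refl_on_def conj_rel_def conjugate_def
    by (auto intro!: exI[of _ id] simp: tconj_id permutes_id)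
  show "sym (conj_rel n)"
  proof (rule symI)
    fix T T' assume "(T, T') \<in> conj_rel n"
    then obtain g where "g permutes {1..2*n}" "T' = tconj g T" "T \<in> adm_disj n" "T' \<in> adm_disj n"
      unfolding conj_rel_def conjugate_def by auto
    then show "(T', T) \<in> conj_rel n"
      unfolding conj_rel_def conjugate_def
      by (auto intro!: exI[of _ "inv g"] simp: tconj_inv permutes_inv)
  qed
  show "trans (conj_rel n)"
  proof (rule transI)
    fix T T' T'' assume "(T, T') \<in> conj_rel n" "(T', T'') \<in> conj_rel n"
    then obtain g h where "g permutes {1..2*n}" "T' = tconj g T" "T \<in> adm_disj n"
      "h permutes {1..2*n}" "T'' = tconj h T'" "T'' \<in> adm_disj n"
      unfolding conj_rel_def conjugate_def by auto
    then show "(T, T'') \<in> conj_rel n"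
      unfolding conj_rel_def conjugate_def
      by (auto intro!: exI[of _ "h \<circ> g"] simp: tconj_comp permutes_compose)
  qed
qed

lemma agree:
  assumes n1: "n \<ge> 1"
  and f: "\<And>x. f (sigma_std n x) = sigma_std n (f x)"
  and h: "\<And>x. h (sigma_std n x) = sigma_std n (h x)"
  and e: "f (2*n) = h (2*n)"
  and fo: "\<And>x. x \<notin> {1..2*n} \<Longrightarrow> f x = x"
  and ho: "\<And>x. x \<notin> {1..2*n} \<Longrightarrow> h x = x"
  shows "f = h"
proof -
  have key: "j < 2*n \<Longrightarrow> f (2*n - j) = h (2*n - j)" for j
  proof (induction j)
    case 0 then show ?case using e by simp
  next
    case (Suc j)
    have s: "sigma_std n (2*n - j) = 2*n - Suc j"
      unfolding sigma_eval[OF n1] using Suc.prems by auto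
    have "f (2*n - Suc j) = sigma_std n (f (2*n - j))" using f[of "2*n-j"] s by simp
    also have "\<dots> = sigma_std n (h (2*n - j))" using Suc by simp
    also have "\<dots> = h (2*n - Suc j)" using h[of "2*n-j"] s by simp
    finally show ?case .
  qed
  show ?thesis
  proof
    fix x
    show "f x = h x"
    proof (cases "x \<in> {1..2*n}")
      case True
      then have "x = 2*n - (2*n - x)" "2*n - x < 2*n" by auto
      then show ?thesis using key by metis
    next
      case False then show ?thesis using fo ho by simp
    qed
  qed
qed

lemma pconj_fix_comm:
  assumes "g permutes S" "pconj g s = s"
  shows "g (s x) = s (g x)"
proof -
  have "g (s (inv g (g x))) = s (g x)" using assms(2) by (metis pconj_eq comp_apply)
  then show ?thesis using permutes_inverses(2)[OF assms(1)] by simp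
qed

lemma conj_special:
  assumes n: "n \<ge> 2" and g: "g permutes {1..2*n}"
  and c1: "pconj g (sigma_std n) = sigma_std n" and c2: "pconj g (S0 n) = S0 n"
  shows "g = id \<or> g = RR n"
proof -
  have n1: "n \<ge> 1" using n by simp
  have gs: "g (sigma_std n x) = sigma_std n (g x)" for x using pconj_fix_comm[OF g c1] .
  have g0: "g (S0 n x) = S0 n (g x)" for x using pconj_fix_comm[OF g c2] .
  have gc: "g (CC n x) = CC n (g x)" for x
    using gs g0 CC_sigma[OF n1] by metis
  have go: "x \<notin> {1..2*n} \<Longrightarrow> g x = x" for x using g by (simp add: permutes_not_in)
  let ?y = "g (2*n)"
  have yr: "?y \<in> {1..2*n}" using permutes_in_image[OF g, of "2*n"] n by auto
  have "CC n ?y = ?y" using gc[of "2*n"] by (simp add: CC_eval)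
  then have "?y = n \<or> ?y = 2*n" using yr unfolding CC_eval by (auto split: if_splits)
  then show ?thesis
  proof
    assume "?y = n"
    have "g = RR n"
      apply (rule agree[of n g "RR n"])
      using n1 gs RR_sigma[OF n1] \<open>?y = n\<close> go apply (auto simp: RR_def)
      done
    then show ?thesis by simp
  next
    assume "?y = 2*n"
    have "g = id"
      apply (rule agree[of n g id])
      using n1 gs \<open>?y = 2*n\<close> go apply auto
      done
    then show ?thesis by simp
  qed
qed

lemma Ti_conj:
  assumes n: "n \<ge> 2" and i: "1 \<le> i" "i < n" and j: "1 \<le> j" "j < n"
  and c: "conjugate n (Ti n i) (Ti n j)"
  shows "j = i \<or> j = n - i"
proof -
  obtain g where g: "g permutes {1..2*n}" and e: "Ti n j = tconj g (Ti n i)"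
    using c unfolding conjugate_def by auto
  have c1: "pconj g (sigma_std n) = sigma_std n" and c2: "pconj g (S0 n) = S0 n"
    using e unfolding Ti_def tconj_def by auto
  from conj_special[OF n g c1 c2] show ?thesis
  proof
    assume "g = id"
    then have "Ti n j = Ti n i" using e by (simp add: tconj_id)
    then show ?thesis using Ti_inj i j by blast
  next
    assume "g = RR n"
    then have "Ti n j = Ti n (n-i)" using e tconj_Ti i by simp
    then show ?thesis using Ti_inj[of j n "n-i"] i j by auto
  qed
qed

lemma Ti_conj_RR:
  assumes "1 \<le> i" "i < n"
  shows "conjugate n (Ti n i) (Ti n (n-i))"
  unfolding conjugate_def using tconj_Ti[OF assms] RR_permutes by metis

lemma Ti_rel:
  assumes n: "n \<ge> 2" and i: "1 \<le> i" "i < n" and j: "1 \<le> j" "j < n"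
  shows "(Ti n i, Ti n j) \<in> conj_rel n \<longleftrightarrow> j = i \<or> j = n - i"
proof
  assume "(Ti n i, Ti n j) \<in> conj_rel n"
  then show "j = i \<or> j = n - i" using Ti_conj[OF n i j] unfolding conj_rel_def by auto
next
  assume "j = i \<or> j = n - i"
  then have "conjugate n (Ti n i) (Ti n j)"
  proof
    assume "j = i" then show ?thesis unfolding conjugate_def
      by (auto intro!: exI[of _ id] simp: tconj_id permutes_id)
  next
    assume "j = n - i" then show ?thesis using Ti_conj_RR[OF i] by simp
  qed
  then show "(Ti n i, Ti n j) \<in> conj_rel n"
    unfolding conj_rel_def using Ti_adm i j by auto
qed



lemma pconj_apply: "pconj g s x = g (s (inv g x))"
  by (simp add: pconj_eq)

lemma pconj_permutes: "g permutes S \<Longrightarrow> s permutes S \<Longrightarrow> pconj g s permutes S"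
  unfolding pconj_eq by (intro permutes_compose permutes_inv) auto

lemma pconj_invol: "g permutes S \<Longrightarrow> (\<And>x. s (s x) = x) \<Longrightarrow> pconj g s (pconj g s x) = x"
  by (simp add: pconj_apply permutes_inverses)

lemma supp_pconj: "g permutes S \<Longrightarrow> x \<in> supp (pconj g s) \<Longrightarrow> inv g x \<in> supp s"
  unfolding supp_def pconj_apply using permutes_inverses(1) by fastforce

lemma cycle_two: "cycle_of_list [a, b] = transpose a b"
  by simp

lemma pconj_transpose:
  assumes "g permutes S" "a \<noteq> b"
  shows "pconj g (transpose a b) = transpose (g a) (g b)"
proof -
  have "pconj g (transpose a b) = g \<circ> cycle_of_list [a,b] \<circ> inv g"
    by (simp add: pconj_eq)
  also have "\<dots> = cycle_of_list (map g [a,b])"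
    using assms by (intro conjugation_of_cycle) (auto simp: permutes_bij)
  finally show ?thesis by simp
qed

lemma normalize:
  assumes n: "n \<ge> 2" and T: "T \<in> adm_disj n"
  shows "\<exists>i. 1 \<le> i \<and> i < n \<and> conjugate n T (Ti n i)"
proof -
  have n1: "n \<ge> 1" using n by simp
  obtain s0 si s1 t where Te: "T = (s0, si, s1, t)" by (cases T) auto
  from T have p0: "s0 permutes {1..2*n}" and psi: "si permutes {1..2*n}"
    and p1: "s1 permutes {1..2*n}" and pt: "t permutes {1..2*n}"
    and d0: "prod_disj_transp n s0" and d1: "prod_disj_transp (n-2) s1" and tr: "is_transposition t"
    and cyc: "is_full_cycle n si"
    and pr: "pmul (pmul (pmul s0 si) s1) t = id" and dj: "supp s1 \<inter> supp t = {}"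
    unfolding Te adm_disj_def admissible_def disj_st_def by auto
  from d0 obtain ps0 where "distinct (ents ps0)" "s0 = prod_transp ps0"
    unfolding prod_disj_transp_def ents_def by auto
  then have i0: "s0 (s0 x) = x" for x using pt_invol by simp
  from d1 obtain ps1 where ps1: "length ps1 = n-2" "distinct (ents ps1)" "s1 = prod_transp ps1"
    unfolding prod_disj_transp_def ents_def by auto
  then have i1: "s1 (s1 x) = x" for x using pt_invol by simp
  from tr obtain a b where ta: "t = transpose a b" "a \<noteq> b" unfolding is_transposition_def by auto
  from cyc obtain xs where xs: "length xs = 2*n" "distinct xs" "set xs = {1..2*n}" "si = cycle_of_list xs"
    unfolding is_full_cycle_def by auto
  have eq: "t (s1 (si (s0 x))) = x" for x
    using fun_cong[OF pr, of x] by (simp add: pmul_def)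
  let ?R = "{1..2*n::nat}"
  have "\<not> ?R \<subseteq> set (ents ps1) \<union> {a,b}"
  proof
    assume sub: "?R \<subseteq> set (ents ps1) \<union> {a,b}"
    have "card ?R \<le> card (set (ents ps1) \<union> {a,b})" by (rule card_mono) (use sub in auto)
    also have "\<dots> \<le> card (set (ents ps1)) + card {a,b}" by (rule card_Un_le)
    also have "\<dots> \<le> 2*(n-2) + 2"
    proof -
      have "card (set (ents ps1)) \<le> 2*(n-2)" using card_length[of "ents ps1"] length_ents[of ps1] ps1 by simp
      moreover have "card {a,b} \<le> 2" by (simp add: card_insert_if)
      ultimately show ?thesis by simp
    qed
    finally show False using n by simp
  qed
  then obtain p where p: "p \<in> ?R" "p \<notin> set (ents ps1)" "p \<noteq> a" "p \<noteq> b" by blast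
  have s1p: "s1 p = p" using pt_fix p ps1 by simp
  have tp: "t p = p" using ta p by simp
  obtain k where k: "k < length xs" "xs ! k = p" using p(1) xs(3) by (metis in_set_conv_nth)
  define xs' where "xs' = rotate k xs"
  have xs': "distinct xs'" "set xs' = ?R" "length xs' = 2*n" "xs' ! 0 = p"
    using xs k by (auto simp: xs'_def nth_rotate)
  have si': "si = cycle_of_list xs'"
    using xs cycle_of_list_rotate_independent unfolding xs'_def by metis
  define ys where "ys = rev [1..<2*n+1]"
  have ys: "distinct ys" "set ys = ?R" "length ys = 2*n" "ys ! 0 = 2*n"
    using n by (auto simp: ys_def rev_nth)
  define g where "g x = (case map_of (zip xs' ys) x of None \<Rightarrow> x | Some y \<Rightarrow> y)" for x
  have gnth: "g (xs' ! j) = ys ! j" if "j < 2*n" for j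
    using map_of_zip_nth[of xs' ys j] xs' ys that by (simp add: g_def)
  have gout: "g x = x" if "x \<notin> ?R" for x
  proof -
    have "fst ` set (zip xs' ys) = set xs'" using xs' ys by (metis map_fst_zip set_map)
    then have "map_of (zip xs' ys) x = None" using that xs' by (simp add: map_of_eq_None_iff)
    then show ?thesis by (simp add: g_def)
  qed
  have mapg: "map g xs' = ys"
    by (rule nth_equalityI) (use xs' ys gnth in auto)
  have gimg: "g ` ?R = ?R"
    using mapg xs'(2) ys(2) by (metis list.set_map)
  have gperm: "g permutes ?R"
  proof (rule bij_imp_permutes)
    have "inj_on g ?R" by (metis eq_card_imp_inj_on finite_atLeastAtMost gimg)
    then show "bij_betw g ?R ?R" using gimg by (simp add: bij_betw_def)
    show "\<And>x. x \<notin> ?R \<Longrightarrow> g x = x" by (rule gout)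
  qed
  have gp: "g p = 2*n" using gnth[of 0] xs' ys n by simp
  have ginvp: "inv g (2*n) = p" using gp permutes_inverses(2)[OF gperm, of p] by simp
  have gsig: "pconj g si = sigma_std n"
  proof -
    have "pconj g si = g \<circ> cycle_of_list xs' \<circ> inv g" by (simp add: pconj_eq si')
    also have "\<dots> = cycle_of_list (map g xs')"
      using xs' gperm by (intro conjugation_of_cycle) (auto simp: permutes_bij)
    finally show ?thesis by (simp add: mapg ys_def sigma_std_def)
  qed
  have gab: "g a \<noteq> g b" using ta(2) permutes_inj[OF gperm] by (auto dest: injD)
  have tt': "pconj g t = transpose (g a) (g b)" using pconj_transpose[OF gperm ta(2)] ta by simp
  have dj': "supp (pconj g s1) \<inter> supp (pconj g t) = {}"
    using dj supp_pconj[OF gperm] by blast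
  have eq': "pconj g t (pconj g s1 (sigma_std n (pconj g s0 x))) = x" for x
  proof -
    have "pconj g t (pconj g s1 (pconj g si (pconj g s0 x))) = g (t (s1 (si (s0 (inv g x)))))"
      by (simp add: pconj_apply permutes_inverses[OF gperm])
    also have "\<dots> = x" using eq permutes_inverses[OF gperm] by simp
    finally show ?thesis using gsig by simp
  qed
  have f1: "pconj g s1 (2*n) = 2*n" by (simp add: pconj_apply ginvp s1p gp)
  have ft: "pconj g t (2*n) = 2*n" by (simp add: pconj_apply ginvp tp gp)
  have res: "pconj g s0 = S0 n \<and> (\<forall>x. pconj g t (pconj g s1 x) = CC n x) \<and>
        (\<exists>i\<in>{1..n-1}. pconj g t = transpose i (2*n-i))"
    by (rule core[OF n pconj_permutes[OF gperm p0] pconj_permutes[OF gperm p1] pconj_permutes[OF gperm pt]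
          pconj_invol[OF gperm i0] pconj_invol[OF gperm i1] tt' gab dj' eq' f1 ft])
  then obtain i where i: "1 \<le> i" "i < n" "pconj g t = transpose i (2*n-i)" and s0': "pconj g s0 = S0 n"
    and ct: "\<forall>x. pconj g t (pconj g s1 x) = CC n x" by auto
  have s1': "pconj g s1 = s1i n i"
  proof
    fix x
    have "pconj g s1 x = pconj g t (pconj g t (pconj g s1 x))" using i by simp
    also have "\<dots> = s1i n i x" using ct i s1i_alt[OF i(1,2)] by simp
    finally show "pconj g s1 x = s1i n i x" .
  qed
  have "tconj g T = Ti n i"
    unfolding Te tconj_def Ti_def using s0' gsig s1' i by simp
  then show ?thesis using i gperm unfolding conjugate_def by metis
qed



lemma half_lemma:
  fixes n i :: nat
  assumes n: "n \<ge> 2" and i: "1 \<le> i" "i < n"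
  shows "n - i = i \<longleftrightarrow> even n \<and> transpose i (2*n-i) = transpose (n div 2) (3*n div 2)"
proof
  assume "n - i = i"
  then have e: "n = 2*i" by simp
  then have "n div 2 = i" "3*n div 2 = 2*n - i" by simp_all
  then show "even n \<and> transpose i (2*n-i) = transpose (n div 2) (3*n div 2)" using e by simp
next
  assume h: "even n \<and> transpose i (2*n-i) = transpose (n div 2) (3*n div 2)"
  then obtain m where m: "n = 2*m" by blast
  have "3*n div 2 = 2*n - m" using m by simp
  then have "transpose i (2*n-i) = transpose m (2*n-m)" using h m by simp
  moreover have "1 \<le> m" "m < n" using m n by auto
  ultimately have "i = m" using t_inj i by blast
  then show "n - i = i" using m by simp
qed

theorem mainTheorem12:
  fixes n :: nat
  assumes "n \<ge> 2"
  shows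
    "(\<forall>s0 si s1 t. admissible n (s0, si, s1, t) \<and> special n (s0, si, s1, t) \<and> disj_st (s0, si, s1, t) \<longrightarrow>
        s0 = prod_transp (map (\<lambda>i. (i, 2*n+1-i)) [1..<n+1]) \<and>
        pmul s1 t = prod_transp (map (\<lambda>i. (i, 2*n-i)) [1..<n]) \<and>
        (\<exists>i\<in>{1..n-1}. t = transpose i (2*n-i)))
   \<and> (\<forall>i\<in>{1..n-1}. \<exists>s0 si s1.
        admissible n (s0, si, s1, transpose i (2*n-i)) \<and> special n (s0, si, s1, transpose i (2*n-i)) \<and>
        disj_st (s0, si, s1, transpose i (2*n-i)))
   \<and> (\<forall>T T'. T \<in> adm_disj n \<and> special n T \<and> T' \<in> adm_disj n \<and> special n T' \<and> T \<noteq> T' \<longrightarrow>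
        (conjugate n T T' \<longleftrightarrow>
           (tconj (sigma_std n ^^ n) T = T' \<and> tconj (sigma_std n ^^ n) T' = T)))
   \<and> (\<forall>s0 si s1 t. (s0, si, s1, t) \<in> adm_disj n \<and> special n (s0, si, s1, t) \<longrightarrow>
        (tconj (sigma_std n ^^ n) (s0, si, s1, t) = (s0, si, s1, t) \<longleftrightarrow>
           even n \<and> t = transpose (n div 2) (3*n div 2)))
   \<and> card (adm_disj n // conj_rel n) = n div 2"
proof -
  have n: "n \<ge> 2" using assms .
  have n1: "n \<ge> 1" using assms by simp
  have pw: "sigma_std n ^^ n = RR n" using sigma_pow_n[OF n1] .
  have P1: "\<forall>s0 si s1 t. admissible n (s0, si, s1, t) \<and> special n (s0, si, s1, t) \<and> disj_st (s0, si, s1, t) \<longrightarrow>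
        s0 = prod_transp (map (\<lambda>i. (i, 2*n+1-i)) [1..<n+1]) \<and>
        pmul s1 t = prod_transp (map (\<lambda>i. (i, 2*n-i)) [1..<n]) \<and>
        (\<exists>i\<in>{1..n-1}. t = transpose i (2*n-i))"
  proof (intro allI impI)
    fix s0 si s1 t
    assume h: "admissible n (s0, si, s1, t) \<and> special n (s0, si, s1, t) \<and> disj_st (s0, si, s1, t)"
    have r: "si = sigma_std n \<and> s0 = S0 n \<and> (\<forall>x. t (s1 x) = CC n x) \<and> (\<exists>i\<in>{1..n-1}. t = transpose i (2*n-i))"
      using part1[OF n] h by blast
    have "pmul s1 t = CC n" using r by (auto simp: pmul_def)
    then show "s0 = prod_transp (map (\<lambda>i. (i, 2*n+1-i)) [1..<n+1]) \<and>
        pmul s1 t = prod_transp (map (\<lambda>i. (i, 2*n-i)) [1..<n]) \<and>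
        (\<exists>i\<in>{1..n-1}. t = transpose i (2*n-i))"
      using r by (simp add: S0_def CC_def)
  qed
  have P2: "\<forall>i\<in>{1..n-1}. \<exists>s0 si s1.
        admissible n (s0, si, s1, transpose i (2*n-i)) \<and> special n (s0, si, s1, transpose i (2*n-i)) \<and>
        disj_st (s0, si, s1, transpose i (2*n-i))"
  proof
    fix i assume "i \<in> {1..n-1}"
    then have i: "1 \<le> i" "i < n" using n by auto
    show "\<exists>s0 si s1.
        admissible n (s0, si, s1, transpose i (2*n-i)) \<and> special n (s0, si, s1, transpose i (2*n-i)) \<and>
        disj_st (s0, si, s1, transpose i (2*n-i))"
      using Ti_adm[OF i] Ti_special[OF i] unfolding adm_disj_def Ti_def by blast
  qed
  have P3: "\<forall>T T'. T \<in> adm_disj n \<and> special n T \<and> T' \<in> adm_disj n \<and> special n T' \<and> T \<noteq> T' \<longrightarrow>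
        (conjugate n T T' \<longleftrightarrow>
           (tconj (sigma_std n ^^ n) T = T' \<and> tconj (sigma_std n ^^ n) T' = T))"
  proof (intro allI impI)
    fix T T'
    assume h: "T \<in> adm_disj n \<and> special n T \<and> T' \<in> adm_disj n \<and> special n T' \<and> T \<noteq> T'"
    obtain i where i: "i \<in> {1..n-1}" "T = Ti n i" using special_form[OF n] h by blast
    obtain j where j: "j \<in> {1..n-1}" "T' = Ti n j" using special_form[OF n] h by blast
    have ii: "1 \<le> i" "i < n" and jj: "1 \<le> j" "j < n" using i j n by auto
    have nii: "1 \<le> n - i" "n - i < n" using ii by auto
    show "conjugate n T T' \<longleftrightarrow> (tconj (sigma_std n ^^ n) T = T' \<and> tconj (sigma_std n ^^ n) T' = T)"
    proof
      assume "conjugate n T T'"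
      then have "j = i \<or> j = n - i" using Ti_conj[OF n ii jj] i j by simp
      moreover have "j \<noteq> i" using h i j by auto
      ultimately have jn: "j = n - i" by simp
      have "tconj (RR n) T = T'" using tconj_Ti[OF ii] i j jn by simp
      moreover have "tconj (RR n) T' = T" using tconj_Ti[OF nii] i j jn ii by simp
      ultimately show "tconj (sigma_std n ^^ n) T = T' \<and> tconj (sigma_std n ^^ n) T' = T"
        using pw by simp
    next
      assume "tconj (sigma_std n ^^ n) T = T' \<and> tconj (sigma_std n ^^ n) T' = T"
      then show "conjugate n T T'" using pw RR_permutes unfolding conjugate_def by metis
    qed
  qed
  have P4: "\<forall>s0 si s1 t. (s0, si, s1, t) \<in> adm_disj n \<and> special n (s0, si, s1, t) \<longrightarrow>
        (tconj (sigma_std n ^^ n) (s0, si, s1, t) = (s0, si, s1, t) \<longleftrightarrow>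
           even n \<and> t = transpose (n div 2) (3*n div 2))"
  proof (intro allI impI)
    fix s0 si s1 t
    assume h: "(s0, si, s1, t) \<in> adm_disj n \<and> special n (s0, si, s1, t)"
    obtain i where i: "i \<in> {1..n-1}" "(s0, si, s1, t) = Ti n i" using special_form[OF n] h by blast
    have ii: "1 \<le> i" "i < n" using i n by auto
    have nii: "1 \<le> n - i" "n - i < n" using ii by auto
    have tt: "t = transpose i (2*n-i)" using i by (simp add: Ti_def)
    have "tconj (sigma_std n ^^ n) (s0, si, s1, t) = Ti n (n-i)" using pw tconj_Ti[OF ii] i by simp
    then have "tconj (sigma_std n ^^ n) (s0, si, s1, t) = (s0, si, s1, t) \<longleftrightarrow> n - i = i"
      using i Ti_inj[OF nii ii] by auto
    then show "tconj (sigma_std n ^^ n) (s0, si, s1, t) = (s0, si, s1, t) \<longleftrightarrow>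
           even n \<and> t = transpose (n div 2) (3*n div 2)"
      using half_lemma[OF n ii] tt by simp
  qed
  have P5: "card (adm_disj n // conj_rel n) = n div 2"
  proof -
    have eqv: "equiv (adm_disj n) (conj_rel n)" by (rule equiv_conj)
    define cls where "cls i = conj_rel n `` {Ti n i}" for i
    have Q: "adm_disj n // conj_rel n = cls ` {1..n div 2}"
    proof
      show "adm_disj n // conj_rel n \<subseteq> cls ` {1..n div 2}"
      proof
        fix X assume "X \<in> adm_disj n // conj_rel n"
        then obtain T where X: "X = conj_rel n `` {T}" and T: "T \<in> adm_disj n" by (rule quotientE)
        obtain i where i: "1 \<le> i" "i < n" "conjugate n T (Ti n i)" using normalize[OF n T] by blast
        have "(T, Ti n i) \<in> conj_rel n" using T i Ti_adm[OF i(1,2)] unfolding conj_rel_def by simp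
        then have Xi: "X = cls i" unfolding X cls_def by (rule equiv_class_eq[OF eqv])
        show "X \<in> cls ` {1..n div 2}"
        proof (cases "i \<le> n div 2")
          case True then show ?thesis using Xi i by auto
        next
          case False
          have ni: "1 \<le> n - i" "n - i < n" using i by auto
          have "(Ti n i, Ti n (n-i)) \<in> conj_rel n" using Ti_rel[OF n i(1,2) ni] by simp
          then have "cls i = cls (n-i)" unfolding cls_def by (rule equiv_class_eq[OF eqv])
          moreover have "n - i \<in> {1..n div 2}" using False i by auto
          ultimately show ?thesis using Xi by auto
        qed
      qed
      show "cls ` {1..n div 2} \<subseteq> adm_disj n // conj_rel n"
      proof
        fix X assume "X \<in> cls ` {1..n div 2}"
        then obtain i where i: "i \<in> {1..n div 2}" "X = cls i" by auto
        have ii: "1 \<le> i" "i < n" using i n by auto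
        show "X \<in> adm_disj n // conj_rel n" unfolding i(2) cls_def
          by (rule quotientI) (rule Ti_adm[OF ii])
      qed
    qed
    have inj: "inj_on cls {1..n div 2}"
    proof (rule inj_onI)
      fix i j assume i: "i \<in> {1..n div 2}" and j: "j \<in> {1..n div 2}" and e: "cls i = cls j"
      have ii: "1 \<le> i" "i < n" and jj: "1 \<le> j" "j < n" using i j n by auto
      have "(Ti n i, Ti n j) \<in> conj_rel n"
        using e eq_equiv_class_iff[OF eqv Ti_adm[OF ii] Ti_adm[OF jj]] unfolding cls_def by simp
      then have "j = i \<or> j = n - i" using Ti_rel[OF n ii jj] by simp
      then show "i = j" using i j by auto
    qed
    show ?thesis unfolding Q using card_image[OF inj] by simp
  qed
  show ?thesis using P1 P2 P3 P4 P5 by (intro conjI)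
qed


end
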